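(* Let $M \subseteq \mathrm{Inj}(\Omega)$ be a normal submonoid. Then either $M \cap \mathrm{Inj}_{\infty}(\Omega) = \emptyset$ or $\mathrm{Inj}_{\infty}(\Omega) \subseteq M$.
   Context: $\Omega$ is a countably infinite set; maps are written on the right and composed left to right. $\mathrm{Inj}(\Omega)$ is the monoid of all injective maps $\Omega\to\Omega$, $\mathrm{Sym}(\Omega)$ the group of permutations of $\Omega$. $\mathrm{Inj}_\infty(\Omega)=\{f\in\mathrm{Inj}(\Omega): |\Omega\setminus(\Omega)f|=\aleph_0\}$. A subset of $\mathrm{Inj}(\Omega)$ is normal if it is closed under $f\mapsto afa^{-1}$ for all $a\in\mathrm{Sym}(\Omega)$. *)

theory Defs
  imports Main "HOL-Library.Countable_Set"
begin

text \<open>Maps are Isabelle functions; the paper composes left to right, so the paper's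
  product f g (first f, then g) is g \<circ> f here.\<close>

definition Inj :: "('a \<Rightarrow> 'a) set" where
  "Inj = {f. inj f}"

definition Sym :: "('a \<Rightarrow> 'a) set" where
  "Sym = {f. bij f}"

definition Inj_inf :: "('a \<Rightarrow> 'a) set" where
  "Inj_inf = {f. inj f \<and> infinite (UNIV - range f)}"

definition submonoid_Inj :: "('a \<Rightarrow> 'a) set \<Rightarrow> bool" where
  "submonoid_Inj M \<longleftrightarrow> M \<subseteq> Inj \<and> id \<in> M \<and> (\<forall>f\<in>M. \<forall>g\<in>M. g \<circ> f \<in> M)"

text \<open>Paper: closed under f \<mapsto> a f a^{-1} (left-to-right), i.e. x \<mapsto> (inv a)(f(a x)).\<close>
definition normal_Inj :: "('a \<Rightarrow> 'a) set \<Rightarrow> bool" where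
  "normal_Inj M \<longleftrightarrow> (\<forall>f\<in>M. \<forall>a\<in>Sym. inv a \<circ> f \<circ> a \<in> M)"

end

theory Submission
  imports Defs
begin


definition rk :: "('a \<Rightarrow> 'a) \<Rightarrow> bool" where
  "rk t \<longleftrightarrow> inj t \<and> infinite (- range t) \<and> (\<exists>r::'a\<Rightarrow>nat. \<forall>x. r x < r (t x))"

lemma ex_dec:
  assumes "\<forall>x. (r::'a\<Rightarrow>nat) x < r (t x)"
  shows "\<exists>a n. a \<notin> range t \<and> x = (t^^n) a"
proof (induction x rule: measure_induct_rule[of r])
  case (less x)
  show ?case
  proof (cases "x \<in> range t")
    case True
    then obtain y where xy: "x = t y" by auto
    with assms have "r y < r x" by auto
    with less obtain a n where "a \<notin> range t" "y = (t^^n) a" by blast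
    then show ?thesis using xy by (intro exI[of _ a] exI[of _ "Suc n"]) auto
  next
    case False then show ?thesis by (intro exI[of _ x] exI[of _ 0]) auto
  qed
qed

lemma uniq_dec:
  assumes "inj t" "a \<notin> range t" "b \<notin> range t" "(t^^n) a = (t^^m) b"
  shows "n = m \<and> a = b"
  using assms(4)
proof (induction n arbitrary: m)
  case 0
  then show ?case using assms(2) by (cases m) auto
next
  case (Suc n)
  show ?case
  proof (cases m)
    case 0 then show ?thesis using Suc.prems assms(3) by auto
  next
    case (Suc k)
    then have "(t^^n) a = (t^^k) b" using Suc.prems assms(1) by (auto dest: injD)
    then show ?thesis using Suc.IH Suc by auto
  qed
qed

lemma countable_inf_bij:
  assumes "countable A" "infinite A" "countable B" "infinite B"
  shows "\<exists>\<phi>. bij_betw \<phi> A B"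
proof -
  have 1: "bij_betw (from_nat_into A) UNIV A" "bij_betw (from_nat_into B) UNIV B"
    using assms bij_betw_from_nat_into by blast+
  then have "bij_betw (inv_into UNIV (from_nat_into A)) A UNIV" by (simp add: bij_betw_inv_into)
  then show ?thesis using 1(2) bij_betw_trans by blast
qed



lemma rk_conj:
  assumes cU: "countable (UNIV :: 'a set)" and t: "rk (t::'a\<Rightarrow>'a)" and s: "rk (s::'a\<Rightarrow>'a)"
  shows "\<exists>a. bij a \<and> s = inv a \<circ> t \<circ> a"
proof -
  obtain rt :: "'a \<Rightarrow> nat" where rt: "\<forall>x. rt x < rt (t x)" using t unfolding rk_def by blast
  obtain rs :: "'a \<Rightarrow> nat" where rs: "\<forall>x. rs x < rs (s x)" using s unfolding rk_def by blast
  have it: "inj t" and iS: "inj s" using t s unfolding rk_def by auto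
  obtain \<phi> where phi: "bij_betw \<phi> (- range s) (- range t)"
  proof -
    have "countable (- range s)" "countable (- range t)"
      using countable_subset[OF subset_UNIV cU] by blast+
    then show ?thesis using countable_inf_bij[of "- range s" "- range t"] t s that
      unfolding rk_def by blast
  qed
  define dec where "dec x = (SOME p. fst p \<notin> range s \<and> x = (s^^snd p) (fst p))" for x
  have dec1: "fst (dec x) \<notin> range s \<and> x = (s^^snd (dec x)) (fst (dec x))" for x
  proof -
    obtain b n where "b \<notin> range s \<and> x = (s^^n) b" using ex_dec[OF rs] by blast
    then have "\<exists>p. fst p \<notin> range s \<and> x = (s^^snd p) (fst p)" by (intro exI[of _ "(b,n)"]) auto
    then show ?thesis unfolding dec_def by (rule someI_ex)
  qed
  have dec2: "dec ((s^^n) b) = (b, n)" if "b \<notin> range s" for b n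
  proof -
    have e: "(s^^snd (dec ((s^^n) b))) (fst (dec ((s^^n) b))) = (s^^n) b"
      using dec1[of "(s^^n) b"] by simp
    have "snd (dec ((s^^n) b)) = n \<and> fst (dec ((s^^n) b)) = b"
      using uniq_dec[OF iS dec1[of "(s^^n) b", THEN conjunct1] that e] .
    then show ?thesis by (simp add: prod_eq_iff)
  qed
  define a where "a x = (t^^snd (dec x)) (\<phi> (fst (dec x)))" for x
  have a1: "a ((s^^n) b) = (t^^n) (\<phi> b)" if "b \<notin> range s" for b n
    using dec2[OF that] unfolding a_def by simp
  have phim: "\<phi> b \<notin> range t" if "b \<notin> range s" for b
    using phi that bij_betwE by fastforce
  have comm: "a (s x) = t (a x)" for x
  proof -
    obtain b n where "b \<notin> range s" "x = (s^^n) b" using dec1 by blast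
    then show ?thesis using a1[of b "Suc n"] a1[of b n] by simp
  qed
  have ia: "inj a"
  proof (rule injI)
    fix x y assume "a x = a y"
    obtain b n where b: "b \<notin> range s" "x = (s^^n) b" using dec1 by blast
    obtain b' m where b': "b' \<notin> range s" "y = (s^^m) b'" using dec1 by blast
    have "(t^^n) (\<phi> b) = (t^^m) (\<phi> b')" using \<open>a x = a y\<close> a1 b b' by simp
    then have "n = m \<and> \<phi> b = \<phi> b'" using uniq_dec[OF it phim phim] b b' by blast
    moreover have "b = b'" using calculation phi b b' unfolding bij_betw_def inj_on_def by auto
    ultimately show "x = y" using b b' by simp
  qed
  have sa: "surj a"
  proof -
    have "z \<in> range a" for z
    proof -
      obtain c n where c: "c \<notin> range t" "z = (t^^n) c" using ex_dec[OF rt] by blast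
      have "c \<in> \<phi> ` (- range s)" using bij_betw_imp_surj_on[OF phi] c(1) by simp
      then obtain b where "b \<in> - range s" "\<phi> b = c" by blast
      then have "a ((s^^n) b) = z" using a1[of b n] c by simp
      then show ?thesis by (metis rangeI)
    qed
    then show ?thesis by auto
  qed
  have "s = inv a \<circ> t \<circ> a"
  proof
    fix x show "s x = (inv a \<circ> t \<circ> a) x" using comm[of x] inv_f_f[OF ia] by (metis comp_apply)
  qed
  then show ?thesis using ia sa by (auto simp: bij_def)
qed




lemma claim1:
  fixes f :: "'a \<Rightarrow> 'a"
  assumes cU: "countable (UNIV :: 'a set)"
    and sub: "submonoid_Inj M" and nor: "normal_Inj M" and fM: "f \<in> M" and fI: "f \<in> Inj_inf"
  shows "\<exists>t\<in>M. rk t"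
proof -
  have injf: "inj f" and infA: "infinite (- range f)" using fI unfolding Inj_inf_def by (auto simp: Compl_eq_Diff_UNIV)
  define K where "K = {x. \<forall>n. x \<in> range (f^^n)}"
  have Kr: "x \<in> range f" if "x \<in> K" for x
  proof -
    have "x \<in> range (f^^Suc 0)" using that unfolding K_def by blast
    then show ?thesis by simp
  qed
  have P0: "f x \<notin> K" if "x \<notin> K" for x
  proof
    assume "f x \<in> K"
    have "x \<in> range (f^^n)" for n
    proof -
      have "f x \<in> range (f^^Suc n)" using \<open>f x \<in> K\<close> unfolding K_def by blast
      then obtain y where "f x = f ((f^^n) y)" by auto
      then show ?thesis using injf by (auto dest: injD)
    qed
    then show False using that unfolding K_def by blast
  qed
  have KK: "f x \<in> K" if xK: "x \<in> K" for x
  proof -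
    have "f x \<in> range (f^^n)" for n
    proof -
      obtain y where "x = (f^^n) y" using xK unfolding K_def by blast
      then have "f x = (f^^n) (f y)" by (simp add: funpow_swap1)
      then show ?thesis by blast
    qed
    then show ?thesis unfolding K_def by blast
  qed
  have cK: "countable K" using countable_subset[OF subset_UNIV cU] .
  obtain h :: "nat \<Rightarrow> 'a" where h: "inj h" "range h \<subseteq> - range f"
    using infinite_countable_subset[OF infA] by blast
  define \<beta> where "\<beta> = h \<circ> to_nat_on K"
  have ib: "inj_on \<beta> K" unfolding \<beta>_def
    using comp_inj_on[OF inj_on_to_nat_on[OF cK] inj_on_subset[OF h(1) subset_UNIV]] .
  have bA: "\<beta> x \<notin> range f" for x using h(2) unfolding \<beta>_def by auto
  have bK: "\<beta> x \<notin> K" for x using bA Kr by blast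
  define \<sigma> where "\<sigma> x = (if x \<in> K then \<beta> x else if x \<in> \<beta> ` K then inv_into K \<beta> x else x)" for x
  have ss: "\<sigma> (\<sigma> x) = x" for x
  proof (cases "x \<in> K")
    case True
    then show ?thesis unfolding \<sigma>_def using bK ib by (simp add: inv_into_f_f)
  next
    case False
    show ?thesis
    proof (cases "x \<in> \<beta> ` K")
      case True
      have "inv_into K \<beta> x \<in> K" using True by (simp add: inv_into_into)
      then show ?thesis unfolding \<sigma>_def using False True by (simp add: f_inv_into_f)
    next
      case False2: False
      then show ?thesis unfolding \<sigma>_def using False by simp
    qed
  qed
  have sid: "\<sigma> \<circ> \<sigma> = id" using ss by (simp add: fun_eq_iff)
  have bs: "bij \<sigma>" using o_bij[OF sid sid] .
  have iv: "inv \<sigma> = \<sigma>" using inv_unique_comp[OF sid sid] .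
  have sS: "\<sigma> \<in> Sym" by (simp add: Sym_def bs)
  have "inv \<sigma> \<circ> f \<circ> \<sigma> \<in> M" using nor fM sS unfolding normal_Inj_def by blast
  then have eM: "\<sigma> \<circ> f \<circ> \<sigma> \<in> M" by (simp only: iv)
  define t where "t = f \<circ> (\<sigma> \<circ> f \<circ> \<sigma>)"
  have tM: "t \<in> M" using sub fM eM unfolding submonoid_Inj_def t_def by blast
  define d where "d x = (LEAST n. x \<notin> range (f^^Suc n))" for x
  have Pz: "d x = 0" if "x \<notin> range f" for x
    unfolding d_def using that by (intro Least_eq_0) simp
  have Pd: "Suc (d x) \<le> d (f x)" if "x \<notin> K" for x
  proof -
    have fK: "f x \<notin> K" using P0 that .
    then obtain n where n: "f x \<notin> range (f^^n)" unfolding K_def by blast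
    have "f x \<notin> range (f^^Suc n)"
    proof
      assume "f x \<in> range (f^^Suc n)"
      then obtain y where "f x = (f^^Suc n) y" by blast
      then have "f x = (f^^n) (f y)" by (simp add: funpow_swap1)
      then show False using n by blast
    qed
    then have L: "f x \<notin> range (f^^Suc (d (f x)))" unfolding d_def by (rule LeastI)
    show ?thesis
    proof (cases "d (f x)")
      case 0 then show ?thesis using L by simp
    next
      case (Suc m)
      have "x \<notin> range (f^^Suc m)"
      proof
        assume "x \<in> range (f^^Suc m)"
        then obtain y where "x = (f^^Suc m) y" by blast
        then have "f x = (f^^Suc (Suc m)) y" by simp
        then have "f x \<in> range (f^^Suc (Suc m))" by (metis rangeI)
        then show False using L Suc by simp
      qed
      then have "d x \<le> m" unfolding d_def by (rule Least_le)
      then show ?thesis using Suc by simp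
    qed
  qed
  define r where "r x = (if x \<in> K then 0 else Suc (d x))" for x
  have rt: "r x < r (t x)" for x
  proof -
    have tx: "t x = f (\<sigma> (f (\<sigma> x)))" unfolding t_def by simp
    show ?thesis
    proof (cases "x \<in> K")
      case True
      have s1: "\<sigma> x = \<beta> x" unfolding \<sigma>_def using True by simp
      have "f (\<beta> x) \<notin> K" using P0 bK by blast
      moreover have "f (\<beta> x) \<notin> \<beta> ` K" using bA by (metis imageE rangeI)
      ultimately have "\<sigma> (f (\<sigma> x)) = f (\<beta> x)" using s1 unfolding \<sigma>_def by simp
      then have "t x \<notin> K" using tx P0 \<open>f (\<beta> x) \<notin> K\<close> by simp
      then show ?thesis unfolding r_def using True by simp
    next
      case False
      show ?thesis
      proof (cases "x \<in> \<beta> ` K")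
        case True
        define k where "k = inv_into K \<beta> x"
        have kK: "k \<in> K" unfolding k_def using True by (simp add: inv_into_into)
        have s1: "\<sigma> x = k" unfolding \<sigma>_def k_def using True False by simp
        have fkK: "f k \<in> K" using KK kK .
        have s2: "\<sigma> (f k) = \<beta> (f k)" unfolding \<sigma>_def using fkK by simp
        have tx2: "t x = f (\<beta> (f k))" using tx s1 s2 by simp
        have nK: "\<beta> (f k) \<notin> K" using bK .
        have "Suc (d (\<beta> (f k))) \<le> d (t x)" using Pd[OF nK] tx2 by simp
        moreover have "t x \<notin> K" using tx2 P0[OF nK] by simp
        moreover have "d x = 0"
        proof -
          obtain k' where "x = \<beta> k'" using True by blast
          then have "x \<notin> range f" using bA by simp
          then show ?thesis by (rule Pz)
        qed
        ultimately show ?thesis unfolding r_def using False by simp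
      next
        case False2: False
        have s1: "\<sigma> x = x" unfolding \<sigma>_def using False False2 by simp
        have fxK: "f x \<notin> K" using P0 False .
        have "f x \<notin> \<beta> ` K" using bA by (metis imageE rangeI)
        then have s2: "\<sigma> (f x) = f x" unfolding \<sigma>_def using fxK by simp
        have tx2: "t x = f (f x)" using tx s1 s2 by simp
        have "Suc (d x) \<le> d (f x)" using Pd False .
        moreover have "Suc (d (f x)) \<le> d (t x)" using Pd[OF fxK] tx2 by simp
        moreover have "t x \<notin> K" using tx2 P0[OF fxK] by simp
        ultimately show ?thesis unfolding r_def using False by simp
      qed
    qed
  qed
  have it: "inj t" unfolding t_def using injf bs by (simp add: bij_is_inj inj_compose)
  have "range t \<subseteq> range f" unfolding t_def by auto
  then have "infinite (- range t)" using infA by (meson Compl_anti_mono infinite_super)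
  then have "rk t" unfolding rk_def using it rt by blast
  then show ?thesis using tM by blast
qed




lemma push:
  fixes c :: "nat \<Rightarrow> 'a" and \<iota> :: "'a \<Rightarrow> nat"
  assumes ic: "inj c" and ii: "inj \<iota>" and k: "k < 2"
    and P: "P = (\<lambda>x. if x \<in> c ` {j. j mod 2 = k} then c (4 * (inv c x div 2) + 2 + k) else c (4 * \<iota> x + k))"
  shows "inj P" "P x \<in> c ` {j. j mod 2 = k}"
    "x \<in> c ` {j. j mod 2 = k} \<Longrightarrow> P x = c (4 * (inv c x div 2) + 2 + k)"
    "x \<notin> c ` {j. j mod 2 = k} \<Longrightarrow> P x = c (4 * \<iota> x + k)"
proof -
  show P1: "x \<in> c ` {j. j mod 2 = k} \<Longrightarrow> P x = c (4 * (inv c x div 2) + 2 + k)" for x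
    using P by simp
  show P2: "x \<notin> c ` {j. j mod 2 = k} \<Longrightarrow> P x = c (4 * \<iota> x + k)" for x
    using P by simp
  show "P x \<in> c ` {j. j mod 2 = k}"
  proof (cases "x \<in> c ` {j. j mod 2 = k}")
    case True
    have "(4 * (inv c x div 2) + 2 + k) mod 2 = k" using k by presburger
    then show ?thesis using P1[OF True] by blast
  next
    case False
    have "(4 * \<iota> x + k) mod 2 = k" using k by presburger
    then show ?thesis using P2[OF False] by blast
  qed
  show "inj P"
  proof (rule injI)
    fix x y assume e: "P x = P y"
    show "x = y"
    proof (cases "x \<in> c ` {j. j mod 2 = k}")
      case xT: True
      then obtain j where j: "x = c j" "j mod 2 = k" by blast
      have ij: "inv c x = j" using j ic by simp
      show ?thesis
      proof (cases "y \<in> c ` {j. j mod 2 = k}")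
        case True
        then obtain j' where j': "y = c j'" "j' mod 2 = k" by blast
        have ij': "inv c y = j'" using j' ic by simp
        have "4 * (j div 2) + 2 + k = 4 * (j' div 2) + 2 + k"
        proof -
          have "c (4 * (inv c x div 2) + 2 + k) = c (4 * (inv c y div 2) + 2 + k)"
            using e by (simp only: P1[OF xT] P1[OF True])
          then show ?thesis unfolding ij ij' using ic by (simp add: inj_eq)
        qed
        then have "j div 2 = j' div 2" by simp
        then have "j = j'" using j(2) j'(2) by (metis div_mult_mod_eq)
        then show ?thesis using j j' by simp
      next
        case False
        have "4 * (j div 2) + 2 + k = 4 * \<iota> y + k"
        proof -
          have "c (4 * (inv c x div 2) + 2 + k) = c (4 * \<iota> y + k)"
            using e by (simp only: P1[OF xT] P2[OF False])
          then show ?thesis unfolding ij using ic by (simp add: inj_eq)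
        qed
        then have False by presburger
        then show ?thesis ..
      qed
    next
      case xF: False
      show ?thesis
      proof (cases "y \<in> c ` {j. j mod 2 = k}")
        case True
        then obtain j' where j': "y = c j'" "j' mod 2 = k" by blast
        have ij': "inv c y = j'" using j' ic by simp
        have "4 * \<iota> x + k = 4 * (j' div 2) + 2 + k"
        proof -
          have "c (4 * \<iota> x + k) = c (4 * (inv c y div 2) + 2 + k)"
            using e by (simp only: P2[OF xF] P1[OF True])
          then show ?thesis unfolding ij' using ic by (simp add: inj_eq)
        qed
        then have False by presburger
        then show ?thesis ..
      next
        case False
        have "4 * \<iota> x + k = 4 * \<iota> y + k"
        proof -
          have "c (4 * \<iota> x + k) = c (4 * \<iota> y + k)"
            using e by (simp only: P2[OF xF] P2[OF False])
          then show ?thesis using ic by (simp add: inj_eq)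
        qed
        then show ?thesis using ii by (simp add: inj_eq)
      qed
    qed
  qed
qed




lemma claim2:
  fixes g :: "'a \<Rightarrow> 'a"
  assumes cU: "countable (UNIV :: 'a set)" and gI: "g \<in> Inj_inf"
  shows "\<exists>u v. rk u \<and> rk v \<and> g = u \<circ> v"
proof -
  have ig: "inj g" and infC: "infinite (- range g)" using gI unfolding Inj_inf_def
    by (auto simp: Compl_eq_Diff_UNIV)
  obtain c :: "nat \<Rightarrow> 'a" where ic: "inj c" and cC: "range c \<subseteq> - range g"
    using infinite_countable_subset[OF infC] by blast
  define \<iota> where "\<iota> = to_nat_on (UNIV :: 'a set)"
  have ii: "inj \<iota>" unfolding \<iota>_def using inj_on_to_nat_on[OF cU] .
  define E where "E = c ` {j. j mod 2 = 0}"
  define Od where "Od = c ` {j. j mod 2 = 1}"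
  define v where "v = (\<lambda>x. if x \<in> c ` {j. j mod 2 = 0} then c (4 * (inv c x div 2) + 2 + 0) else c (4 * \<iota> x + 0))"
  define w where "w = (\<lambda>x. if x \<in> c ` {j. j mod 2 = 1} then c (4 * (inv c x div 2) + 2 + 1) else c (4 * \<iota> x + 1))"
  have k0: "(0::nat) < 2" and k1: "(1::nat) < 2" by simp_all
  note pv = push[OF ic ii k0 v_def]
  note pw = push[OF ic ii k1 w_def]
  have EO: "E \<inter> Od = {}" unfolding E_def Od_def using ic by (auto simp: inj_eq)
  have Eg: "E \<inter> range g = {}" "Od \<inter> range g = {}" unfolding E_def Od_def using cC by auto
  have infE: "infinite E"
  proof -
    have "range (\<lambda>i. c (2 * i)) \<subseteq> E" unfolding E_def by auto
    moreover have "inj (\<lambda>i. c (2 * i))"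
    proof (rule injI)
      fix a b assume "c (2 * a) = c (2 * b)"
      then have "2 * a = 2 * b" using injD[OF ic] by blast
      then show "a = b" by simp
    qed
    ultimately show ?thesis using range_inj_infinite infinite_super by blast
  qed
  have infO: "infinite Od"
  proof -
    have "range (\<lambda>i. c (2 * i + 1)) \<subseteq> Od" unfolding Od_def by auto
    moreover have "inj (\<lambda>i. c (2 * i + 1))"
    proof (rule injI)
      fix a b assume "c (2 * a + 1) = c (2 * b + 1)"
      then have "2 * a + 1 = 2 * b + 1" using injD[OF ic] by blast
      then show "a = b" by simp
    qed
    ultimately show ?thesis using range_inj_infinite infinite_super by blast
  qed
  have iv: "inj v" using pv(1) .
  have rvE: "v x \<in> E" for x unfolding E_def using pv(2) .
  have rwO: "w x \<in> Od" for x unfolding Od_def using pw(2) .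
  have iw: "inj w" using pw(1) .
  define rv where "rv x = (if x \<in> E then inv c x div 2 + 1 else 0)" for x
  have rvv: "rv x < rv (v x)" for x
  proof (cases "x \<in> E")
    case True
    have "v x = c (4 * (inv c x div 2) + 2)" using pv(3) True unfolding E_def by simp
    then have "inv c (v x) = 4 * (inv c x div 2) + 2" using ic by simp
    then show ?thesis unfolding rv_def using True rvE[of x] by simp
  next
    case False
    then show ?thesis unfolding rv_def using rvE[of x] by simp
  qed
  have "Od \<subseteq> - range v" using rvE EO by blast
  then have "infinite (- range v)" using infO infinite_super by blast
  then have rkv: "rk v" unfolding rk_def using iv rvv by blast
  define u where "u y = (if y \<in> range v then g (inv v y) else w y)" for y
  have uv: "g = u \<circ> v"
    by (rule ext) (simp add: u_def iv)
  have urange: "u y \<in> range g \<union> Od" for y unfolding u_def using rwO by auto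
  have iu: "inj u"
  proof (rule injI)
    fix x y assume e: "u x = u y"
    show "x = y"
    proof (cases "x \<in> range v")
      case xT: True
      show ?thesis
      proof (cases "y \<in> range v")
        case True
        then have "g (inv v x) = g (inv v y)" using e xT unfolding u_def by simp
        then have "inv v x = inv v y" using ig by (simp add: inj_eq)
        then show ?thesis using xT True by (metis f_inv_into_f)
      next
        case False
        then have "g (inv v x) = w y" using e xT unfolding u_def by simp
        then have "w y \<in> range g" by (metis rangeI)
        then have False using rwO[of y] Eg(2) by blast
        then show ?thesis ..
      qed
    next
      case xF: False
      show ?thesis
      proof (cases "y \<in> range v")
        case True
        then have "w x = g (inv v y)" using e xF unfolding u_def by simp
        then have "w x \<in> range g" by (metis rangeI)
        then have False using rwO[of x] Eg(2) by blast
        then show ?thesis ..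
      next
        case False
        then have "w x = w y" using e xF unfolding u_def by simp
        then show ?thesis using iw by (simp add: inj_eq)
      qed
    qed
  qed
  have vO: "range v \<inter> Od = {}" using rvE EO by blast
  define ru where "ru y = (if y \<in> range v then 0 else if y \<in> Od then inv c y div 2 + 2 else 1)" for y
  have ruu: "ru y < ru (u y)" for y
  proof (cases "y \<in> range v")
    case True
    have "u y \<in> range g" unfolding u_def using True by simp
    then have ne: "u y \<notin> E" "u y \<notin> Od" using Eg by blast+
    have "u y \<notin> range v"
    proof
      assume "u y \<in> range v"
      then obtain z where "u y = v z" by blast
      then show False using ne(1) rvE[of z] by simp
    qed
    note ne = this ne(2)
    then show ?thesis unfolding ru_def using True by simp
  next
    case yF: False
    have uw: "u y = w y" unfolding u_def using yF by simp
    have nv: "w y \<notin> range v" using rwO vO by blast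
    show ?thesis
    proof (cases "y \<in> Od")
      case True
      have "w y = c (4 * (inv c y div 2) + 2 + 1)" using pw(3) True unfolding Od_def by simp
      then have "inv c (w y) = 4 * (inv c y div 2) + 3" using ic by simp
      then show ?thesis unfolding ru_def using True yF uw nv rwO[of y] by simp
    next
      case False
      then show ?thesis unfolding ru_def using yF uw nv rwO[of y] by simp
    qed
  qed
  have "E \<subseteq> - range u" using urange EO Eg by blast
  then have "infinite (- range u)" using infE infinite_super by blast
  then have rku: "rk u" unfolding rk_def using iu ruu by blast
  show ?thesis using rku rkv uv by blast
qed


theorem mainTheorem3:
  fixes M :: "('a \<Rightarrow> 'a) set"
  assumes "countable (UNIV :: 'a set)" and "infinite (UNIV :: 'a set)"
    and "submonoid_Inj M" and "normal_Inj M"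
  shows "M \<inter> Inj_inf = {} \<or> Inj_inf \<subseteq> M"
proof (cases "M \<inter> Inj_inf = {}")
  case True
  then show ?thesis by blast
next
  case False
  then obtain f where f: "f \<in> M" "f \<in> Inj_inf" by blast
  obtain t where tM: "t \<in> M" "rk t" using claim1[OF assms(1) assms(3) assms(4) f] by blast
  have conjM: "s \<in> M" if sr: "rk s" for s
  proof -
    obtain a where a: "bij a" "s = inv a \<circ> t \<circ> a" using rk_conj[OF assms(1) tM(2) sr] by blast
    have "a \<in> Sym" using a(1) by (simp add: Sym_def)
    then have "inv a \<circ> t \<circ> a \<in> M" using assms(4) tM(1) unfolding normal_Inj_def by blast
    then show ?thesis using a(2) by simp
  qed
  have "g \<in> M" if gI: "g \<in> Inj_inf" for g
  proof -
    obtain u v where uv: "rk u" "rk v" "g = u \<circ> v" using claim2[OF assms(1) gI] by blast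
    have "u \<in> M" "v \<in> M" using conjM uv by blast+
    then have "u \<circ> v \<in> M" using assms(3) unfolding submonoid_Inj_def by blast
    then show ?thesis using uv(3) by simp
  qed
  then show ?thesis by blast
qed

end
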